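(* Let $\mathbb{A}$ be a medial algebra over a field of characteristic not $2,3$ and let $\zeta\in\{-1,1\}$. Define on $\mathbb{A}\times\mathbb{A}$ the multiplication $$(x,y)\circ(z,w)=\big(xz+yw,\ \zeta(xw+yz)\big).$$ Then the resulting algebra $(\mathbb{A}\times\mathbb{A})_\zeta$ is medial, and $\mathbb{A}\times 0$ is a medial subalgebra of it isomorphic to $\mathbb{A}$.
   Context: All algebras are commutative, possibly nonassociative, finite-dimensional. Medial: $(xy)(zw)=(xz)(yw)$ identically. *)

theory Defs
  imports "HOL-Analysis.Product_Vector"
begin

definition bilinear_prod :: "('k::field \<Rightarrow> 'v::ab_group_add \<Rightarrow> 'v) \<Rightarrow> ('v \<Rightarrow> 'v \<Rightarrow> 'v) \<Rightarrow> bool" where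
  "bilinear_prod smul mult \<longleftrightarrow>
     (\<forall>x y z. mult (x + y) z = mult x z + mult y z) \<and>
     (\<forall>x y z. mult x (y + z) = mult x y + mult x z) \<and>
     (\<forall>c x y. mult (smul c x) y = smul c (mult x y)) \<and>
     (\<forall>c x y. mult x (smul c y) = smul c (mult x y))"

definition comm_fd_algebra :: "('k::field \<Rightarrow> 'v::ab_group_add \<Rightarrow> 'v) \<Rightarrow> ('v \<Rightarrow> 'v \<Rightarrow> 'v) \<Rightarrow> bool" where
  "comm_fd_algebra smul mult \<longleftrightarrow>
     (\<exists>B. finite_dimensional_vector_space smul B) \<and>
     bilinear_prod smul mult \<and>
     (\<forall>x y. mult x y = mult y x)"

definition medial_on :: "'v set \<Rightarrow> ('v \<Rightarrow> 'v \<Rightarrow> 'v) \<Rightarrow> bool" where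
  "medial_on S mult \<longleftrightarrow>
     (\<forall>x\<in>S. \<forall>y\<in>S. \<forall>z\<in>S. \<forall>w\<in>S. mult (mult x y) (mult z w) = mult (mult x z) (mult y w))"

abbreviation medial :: "('v \<Rightarrow> 'v \<Rightarrow> 'v) \<Rightarrow> bool" where
  "medial mult \<equiv> medial_on UNIV mult"

definition subalgebra :: "('k::field \<Rightarrow> 'v::ab_group_add \<Rightarrow> 'v) \<Rightarrow> ('v \<Rightarrow> 'v \<Rightarrow> 'v) \<Rightarrow> 'v set \<Rightarrow> bool" where
  "subalgebra smul mult S \<longleftrightarrow>
     module.subspace smul S \<and> (\<forall>x\<in>S. \<forall>y\<in>S. mult x y \<in> S)"

definition pair_scale :: "('k \<Rightarrow> 'v \<Rightarrow> 'v) \<Rightarrow> 'k \<Rightarrow> 'v \<times> 'v \<Rightarrow> 'v \<times> 'v" where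
  "pair_scale smul c p = (smul c (fst p), smul c (snd p))"

definition zeta_mult :: "('k \<Rightarrow> 'v::plus \<Rightarrow> 'v) \<Rightarrow> ('v \<Rightarrow> 'v \<Rightarrow> 'v) \<Rightarrow> 'k \<Rightarrow> 'v \<times> 'v \<Rightarrow> 'v \<times> 'v \<Rightarrow> 'v \<times> 'v" where
  "zeta_mult smul mult \<zeta> p q =
     (mult (fst p) (fst q) + mult (snd p) (snd q),
      smul \<zeta> (mult (fst p) (snd q) + mult (snd p) (fst q)))"

definition alg_iso_onto :: "('k::field \<Rightarrow> 'v::ab_group_add \<Rightarrow> 'v) \<Rightarrow> ('v \<Rightarrow> 'v \<Rightarrow> 'v) \<Rightarrow>
     ('k \<Rightarrow> 'w::ab_group_add \<Rightarrow> 'w) \<Rightarrow> ('w \<Rightarrow> 'w \<Rightarrow> 'w) \<Rightarrow> 'w set \<Rightarrow> ('v \<Rightarrow> 'w) \<Rightarrow> bool" where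
  "alg_iso_onto smul1 mult1 smul2 mult2 S f \<longleftrightarrow>
     Vector_Spaces.linear smul1 smul2 f \<and> bij_betw f UNIV S \<and>
     (\<forall>x y. f (mult1 x y) = mult2 (f x) (f y))"

end

theory Submission
  imports Defs
begin

theorem proposition3p13:
  fixes smul :: "'k::field \<Rightarrow> 'v::ab_group_add \<Rightarrow> 'v"
    and mult :: "'v \<Rightarrow> 'v \<Rightarrow> 'v"
    and \<zeta> :: 'k
  assumes alg: "comm_fd_algebra smul mult"
    and med: "medial mult"
    and char2: "(2::'k) \<noteq> 0"
    and char3: "(3::'k) \<noteq> 0"
    and zeta: "\<zeta> \<in> {-1, 1}"
  shows "comm_fd_algebra (pair_scale smul) (zeta_mult smul mult \<zeta>)
    \<and> medial (zeta_mult smul mult \<zeta>)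
    \<and> subalgebra (pair_scale smul) (zeta_mult smul mult \<zeta>) (UNIV \<times> {0})
    \<and> medial_on (UNIV \<times> {0}) (zeta_mult smul mult \<zeta>)
    \<and> (\<exists>f. alg_iso_onto smul mult (pair_scale smul) (zeta_mult smul mult \<zeta>) (UNIV \<times> {0}) f)"
proof -
  from alg obtain B where fd: "finite_dimensional_vector_space smul B"
    and bil: "bilinear_prod smul mult" and comm: "\<And>x y. mult x y = mult y x"
    unfolding comm_fd_algebra_def by blast
  interpret V: finite_dimensional_vector_space smul B by (rule fd)
  interpret P: finite_dimensional_vector_space_prod smul smul B B by unfold_locales
  have ps: "module_prod.scale smul smul = pair_scale smul"
    by (auto simp: fun_eq_iff P.scale_def pair_scale_def)
  have fdP: "finite_dimensional_vector_space (pair_scale smul) P.Basis_pair"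
    using P.p.finite_dimensional_vector_space_axioms ps by simp
  have vsP: "vector_space (pair_scale smul)"
    using P.p.vector_space_axioms ps by simp
  have modP: "module (pair_scale smul)"
    using P.p.module_axioms ps by simp
  have ml: "mult (x + y) z = mult x z + mult y z" for x y z using bil unfolding bilinear_prod_def by blast
  have mr: "mult x (y + z) = mult x y + mult x z" for x y z using bil unfolding bilinear_prod_def by blast
  have sl: "mult (smul c x) y = smul c (mult x y)" for c x y using bil unfolding bilinear_prod_def by blast
  have sr: "mult x (smul c y) = smul c (mult x y)" for c x y using bil unfolding bilinear_prod_def by blast
  have m0l: "mult 0 x = 0" for x using ml[of 0 0 x] by simp
  have m0r: "mult x 0 = 0" for x using mr[of x 0 0] by simp
  have zz: "\<zeta> * \<zeta> = 1" using zeta by auto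
  have M: "mult (mult x y) (mult z w) = mult (mult x z) (mult y w)" for x y z w
    using med unfolding medial_on_def by blast
  have bilP: "bilinear_prod (pair_scale smul) (zeta_mult smul mult \<zeta>)"
    unfolding bilinear_prod_def zeta_mult_def pair_scale_def
    by (simp add: ml mr sl sr V.scale_right_distrib V.scale_scale mult.commute algebra_simps)
  have commP: "zeta_mult smul mult \<zeta> p q = zeta_mult smul mult \<zeta> q p" for p q
    unfolding zeta_mult_def by (simp add: comm add.commute)
  have medP: "medial (zeta_mult smul mult \<zeta>)"
    unfolding medial_on_def
  proof (intro ballI)
    fix p q r s :: "'v \<times> 'v"
    obtain a b where p: "p = (a,b)" by fastforce
    obtain c d where q: "q = (c,d)" by fastforce
    obtain e f where r: "r = (e,f)" by fastforce
    obtain g h where s: "s = (g,h)" by fastforce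
    show "zeta_mult smul mult \<zeta> (zeta_mult smul mult \<zeta> p q) (zeta_mult smul mult \<zeta> r s) =
          zeta_mult smul mult \<zeta> (zeta_mult smul mult \<zeta> p r) (zeta_mult smul mult \<zeta> q s)"
      unfolding p q r s zeta_mult_def
      using M[of a c e g] M[of a c f h] M[of b d e g] M[of b d f h]
        M[of a d e h] M[of a d f g] M[of b c e h] M[of b c f g]
        M[of a c e h] M[of a c f g] M[of b d e h] M[of b d f g]
        M[of a d e g] M[of a d f h] M[of b c e g] M[of b c f h]
      by (simp add: ml mr sl sr V.scale_right_distrib V.scale_scale zz add_ac)
  qed
  have sub: "subalgebra (pair_scale smul) (zeta_mult smul mult \<zeta>) (UNIV \<times> {0})"
    unfolding subalgebra_def
  proof
    show "module.subspace (pair_scale smul) (UNIV \<times> {0})"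
      unfolding module.subspace_def[OF modP]
      by (auto simp: pair_scale_def zero_prod_def)
    show "\<forall>x\<in>UNIV \<times> {0}. \<forall>y\<in>UNIV \<times> {0}. zeta_mult smul mult \<zeta> x y \<in> UNIV \<times> {0}"
      by (auto simp: zeta_mult_def m0l m0r)
  qed
  have iso: "alg_iso_onto smul mult (pair_scale smul) (zeta_mult smul mult \<zeta>) (UNIV \<times> {0}) (\<lambda>x. (x, 0))"
    unfolding alg_iso_onto_def
  proof (intro conjI allI)
    show "Vector_Spaces.linear smul (pair_scale smul) (\<lambda>x. (x, 0))"
      unfolding Vector_Spaces.linear_def module_hom_def module_hom_axioms_def
      using V.module_axioms modP V.vector_space_axioms vsP
      by (auto simp: pair_scale_def V.scale_right_distrib)
    show "bij_betw (\<lambda>x. (x, 0)) UNIV (UNIV \<times> {0})"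
      by (auto simp: bij_betw_def inj_on_def)
    show "(mult x y, 0) = zeta_mult smul mult \<zeta> (x, 0) (y, 0)" for x y
      by (simp add: zeta_mult_def m0l m0r)
  qed
  have medon: "medial_on (UNIV \<times> {0}) (zeta_mult smul mult \<zeta>)"
    using medP unfolding medial_on_def by blast
  show ?thesis
    using fdP bilP commP medP sub medon iso unfolding comm_fd_algebra_def by blast
qed

end
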